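(* Let $\mathcal{D}$ be an $S(2,k,v)$ with $v>k^3-2k^2+2k$. Then $G_0=0$-$\mathrm{BIG}(\mathcal{D})$ is not silver.
   Context: A Steiner $2$-design $S(2,k,v)$ ($2<k<v$) is a pair $(V,\mathcal{B})$ with $|V|=v$ and $\mathcal{B}$ a collection of $k$-subsets of $V$ (blocks) such that every $2$-subset of $V$ lies in exactly one block. The $0$-block intersection graph $0$-$\mathrm{BIG}(\mathcal{D})$ has the blocks as vertices, two blocks adjacent iff they are disjoint; it is a regular graph. An $\alpha$-set of a graph is a maximum independent set. Let $G$ be an $r$-regular graph and $c$ a proper $(r+1)$-coloring of $G$. A vertex $x$ is rainbow with respect to $c$ if every one of the $r+1$ colors appears on $N[x]=N(x)\cup\{x\}$. Given an $\alpha$-set $I$, $c$ is silver with respect to $I$ if every $x\in I$ is rainbow; $G$ is silver if it admits a silver coloring with respect to some $\alpha$-set. *)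

theory Defs
  imports Main
begin

definition steiner_2_design :: "'a set \<Rightarrow> 'a set set \<Rightarrow> nat \<Rightarrow> nat \<Rightarrow> bool" where
  "steiner_2_design V B k v \<longleftrightarrow>
     finite V \<and> card V = v \<and> 2 < k \<and> k < v \<and>
     (\<forall>b\<in>B. b \<subseteq> V \<and> card b = k) \<and>
     (\<forall>x\<in>V. \<forall>y\<in>V. x \<noteq> y \<longrightarrow> (\<exists>!b. b \<in> B \<and> {x, y} \<subseteq> b))"

(* simple graphs: vertex set and symmetric irreflexive adjacency predicate *)
type_synonym 'v graph = "'v set \<times> ('v \<Rightarrow> 'v \<Rightarrow> bool)"

definition verts :: "'v graph \<Rightarrow> 'v set" where "verts G = fst G"
definition adj :: "'v graph \<Rightarrow> 'v \<Rightarrow> 'v \<Rightarrow> bool" where "adj G = snd G"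

definition nbhd :: "'v graph \<Rightarrow> 'v \<Rightarrow> 'v set" where
  "nbhd G x = {y \<in> verts G. adj G x y}"

definition closed_nbhd :: "'v graph \<Rightarrow> 'v \<Rightarrow> 'v set" where
  "closed_nbhd G x = insert x (nbhd G x)"

definition regular_graph :: "'v graph \<Rightarrow> nat \<Rightarrow> bool" where
  "regular_graph G r \<longleftrightarrow> (\<forall>x\<in>verts G. card (nbhd G x) = r)"

definition independent_set :: "'v graph \<Rightarrow> 'v set \<Rightarrow> bool" where
  "independent_set G I \<longleftrightarrow> I \<subseteq> verts G \<and> (\<forall>x\<in>I. \<forall>y\<in>I. \<not> adj G x y)"

definition alpha_set :: "'v graph \<Rightarrow> 'v set \<Rightarrow> bool" where
  "alpha_set G I \<longleftrightarrow> independent_set G I \<and> finite I \<and>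
     (\<forall>J. independent_set G J \<longrightarrow> finite J \<and> card J \<le> card I)"

definition proper_coloring :: "'v graph \<Rightarrow> nat \<Rightarrow> ('v \<Rightarrow> nat) \<Rightarrow> bool" where
  "proper_coloring G n c \<longleftrightarrow>
     (\<forall>x\<in>verts G. c x < n) \<and>
     (\<forall>x\<in>verts G. \<forall>y\<in>verts G. adj G x y \<longrightarrow> c x \<noteq> c y)"

definition rainbow :: "'v graph \<Rightarrow> nat \<Rightarrow> ('v \<Rightarrow> nat) \<Rightarrow> 'v \<Rightarrow> bool" where
  "rainbow G n c x \<longleftrightarrow> {0..<n} \<subseteq> c ` closed_nbhd G x"

definition silver_coloring :: "'v graph \<Rightarrow> nat \<Rightarrow> ('v \<Rightarrow> nat) \<Rightarrow> 'v set \<Rightarrow> bool" where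
  "silver_coloring G r c I \<longleftrightarrow>
     proper_coloring G (r + 1) c \<and> (\<forall>x\<in>I. rainbow G (r + 1) c x)"

definition silver :: "'v graph \<Rightarrow> bool" where
  "silver G \<longleftrightarrow> (\<exists>r. regular_graph G r \<and>
     (\<exists>I c. alpha_set G I \<and> silver_coloring G r c I))"

definition zero_BIG :: "'a set set \<Rightarrow> 'a set graph" where
  "zero_BIG B = (B, \<lambda>b1 b2. b1 \<noteq> b2 \<and> b1 \<inter> b2 = {})"

end

theory Submission
  imports Defs
begin

locale des =
  fixes V :: "'a set" and B :: "'a set set" and k v :: nat
  assumes sd: "steiner_2_design V B k v"
begin

lemma fin_V: "finite V" using sd unfolding steiner_2_design_def by blast
lemma card_V: "card V = v" using sd unfolding steiner_2_design_def by blast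
lemma k3: "2 < k" using sd unfolding steiner_2_design_def by blast
lemma kv: "k < v" using sd unfolding steiner_2_design_def by blast
lemma blk_sub: "b \<in> B \<Longrightarrow> b \<subseteq> V" using sd unfolding steiner_2_design_def by blast
lemma blk_card: "b \<in> B \<Longrightarrow> card b = k" using sd unfolding steiner_2_design_def by blast
lemma finb: "b \<in> B \<Longrightarrow> finite b" using blk_sub fin_V finite_subset by blast
lemma finB: "finite B"
proof -
  have "B \<subseteq> Pow V" using blk_sub by blast
  then show ?thesis using fin_V finite_subset by blast
qed

lemma uniq:
  assumes "b1 \<in> B" "b2 \<in> B" "x \<in> b1" "y \<in> b1" "x \<in> b2" "y \<in> b2" "x \<noteq> y"
  shows "b1 = b2"
proof -
  have "x \<in> V" "y \<in> V" using assms blk_sub by auto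
  then have "\<exists>!b. b \<in> B \<and> {x,y} \<subseteq> b" using sd assms(7) unfolding steiner_2_design_def by blast
  then show ?thesis using assms by auto
qed

lemma ex_blk: assumes "x \<in> V" "y \<in> V" "x \<noteq> y" shows "\<exists>b\<in>B. x \<in> b \<and> y \<in> b"
proof -
  have "\<exists>!b. b \<in> B \<and> {x,y} \<subseteq> b" using sd assms unfolding steiner_2_design_def by blast
  then show ?thesis by auto
qed

lemma star_card: assumes "q \<in> V" shows "v - 1 \<le> card {b\<in>B. q\<in>b} * (k - 1)"
proof -
  let ?S = "{b\<in>B. q\<in>b}"
  have finS: "finite ?S" using finB by simp
  have "V - {q} \<subseteq> (\<Union>b\<in>?S. b - {q})"
  proof
    fix y assume y: "y \<in> V - {q}"
    then obtain b where "b\<in>B" "q\<in>b" "y\<in>b" using ex_blk[of q y] assms by auto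
    then show "y \<in> (\<Union>b\<in>?S. b - {q})" using y by auto
  qed
  then have "card (V - {q}) \<le> card (\<Union>b\<in>?S. b - {q})"
    by (intro card_mono) (auto simp: finS finb)
  also have "\<dots> \<le> (\<Sum>b\<in>?S. card (b - {q}))" by (rule card_UN_le) (auto simp: finS finb)
  also have "\<dots> = (\<Sum>b\<in>?S. k - 1)" by (intro sum.cong) (auto simp: blk_card finb)
  also have "\<dots> = card ?S * (k-1)" by simp
  finally show ?thesis using assms card_V fin_V by simp
qed

lemma intersecting:
  assumes F: "F \<subseteq> B" "\<And>C D. C\<in>F \<Longrightarrow> D\<in>F \<Longrightarrow> C \<inter> D \<noteq> {}"
    and big: "k*k - k + 1 < card F"
  shows "\<exists>p. \<forall>C\<in>F. p \<in> C"
proof (rule ccontr)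
  assume np: "\<not> ?thesis"
  have finF: "finite F" using finite_subset[OF F(1) finB] .
  obtain B0 where B0: "B0 \<in> F" using big by (metis card.empty less_zeroE ex_in_conv)
  have B0B: "B0 \<in> B" using B0 F by auto
  have bound: "card {C\<in>F. x\<in>C \<and> C\<noteq>B0} \<le> k - 1" if x: "x \<in> B0" for x
  proof -
    obtain Cx where Cx: "Cx \<in> F" "x \<notin> Cx" using np by auto
    have CxB: "Cx \<in> B" using Cx F by auto
    let ?f = "\<lambda>C. SOME y. y \<in> C \<inter> Cx"
    have fy: "?f C \<in> C \<inter> Cx" if "C \<in> F" for C
      using F(2)[OF that Cx(1)] by (metis (mono_tags) someI_ex ex_in_conv)
    have "inj_on ?f {C\<in>F. x\<in>C \<and> C\<noteq>B0}"
    proof (rule inj_onI)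
      fix C D assume C: "C \<in> {C\<in>F. x\<in>C \<and> C\<noteq>B0}" and D: "D \<in> {C\<in>F. x\<in>C \<and> C\<noteq>B0}"
        and eq: "?f C = ?f D"
      have "?f C \<in> C \<inter> Cx" "?f D \<in> D \<inter> Cx" using fy C D by auto
      moreover have "x \<noteq> ?f C" using fy[of C] C Cx by auto
      ultimately show "C = D" using uniq[of C D x "?f C"] C D F(1) eq by auto
    qed
    moreover have "?f ` {C\<in>F. x\<in>C \<and> C\<noteq>B0} \<subseteq> Cx - B0"
    proof
      fix y assume "y \<in> ?f ` {C\<in>F. x\<in>C \<and> C\<noteq>B0}"
      then obtain C where C: "C\<in>F" "x\<in>C" "C\<noteq>B0" and y: "y = ?f C" by auto
      have yC: "y \<in> C \<inter> Cx" using fy[OF C(1)] y by simp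
      have "x \<noteq> y" using yC Cx by auto
      then have "y \<notin> B0" using uniq[of C B0 x y] C F(1) B0B x yC by auto
      then show "y \<in> Cx - B0" using yC by auto
    qed
    moreover have "card (Cx - B0) \<le> k - 1"
    proof -
      have "Cx \<inter> B0 \<noteq> {}" using F(2)[OF Cx(1) B0] .
      then have "card (Cx \<inter> B0) \<ge> 1" using finb[OF CxB]
        by (simp add: Suc_leI card_gt_0_iff)
      then show ?thesis using card_Diff_subset_Int[of Cx B0] finb[OF CxB] blk_card[OF CxB]
        by (simp add: Diff_Int2 card_Diff_subset_Int finb B0B)
    qed
    ultimately show ?thesis using card_inj_on_le[of ?f _ "Cx - B0"] finb[OF CxB]
      by (meson finite_Diff le_trans)
  qed
  have "F \<subseteq> insert B0 (\<Union>x\<in>B0. {C\<in>F. x\<in>C \<and> C\<noteq>B0})" using F(2)[OF B0] by blast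
  then have "card F \<le> card (insert B0 (\<Union>x\<in>B0. {C\<in>F. x\<in>C \<and> C\<noteq>B0}))"
    by (intro card_mono) (auto simp: finF finb B0B)
  also have "\<dots> \<le> Suc (card (\<Union>x\<in>B0. {C\<in>F. x\<in>C \<and> C\<noteq>B0}))"
  proof -
    have "finite (\<Union>x\<in>B0. {C\<in>F. x\<in>C \<and> C\<noteq>B0})" using finF finb[OF B0B] by auto
    then show ?thesis by (simp add: card_insert_if)
  qed
  also have "card (\<Union>x\<in>B0. {C\<in>F. x\<in>C \<and> C\<noteq>B0}) \<le> (\<Sum>x\<in>B0. card {C\<in>F. x\<in>C \<and> C\<noteq>B0})"
    by (rule card_UN_le) (auto simp: finb B0B finF)
  also have "\<dots> \<le> (\<Sum>x\<in>B0. k - 1)" by (intro sum_mono bound)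
  also have "\<dots> = k * (k - 1)" using blk_card[OF B0B] by simp
  finally have "card F \<le> Suc (k * (k - 1))" by simp
  moreover have "Suc (k * (k - 1)) = k*k - k + 1" using k3
    by (simp add: diff_mult_distrib2)
  ultimately show False using big by simp
qed

end


lemma arith_facts:
  fixes k v :: nat
  assumes k: "2 < k" and h: "int v > int k ^ 3 - 2 * int k ^ 2 + 2 * int k"
  shows "(k - 1) * (k*k - k + 1) < v - 1" "2 * k < v" "2 * k < k*k - k + 1"
proof -
  have kk: "k \<le> k * k" using k by simp
  have e1: "int ((k - 1) * (k*k - k + 1)) = int k ^ 3 - 2 * int k ^ 2 + 2 * int k - 1"
  proof -
    obtain m where m: "k = Suc m" using k by (cases k) auto
    have "k*k - k + 1 = m*m + m + 1" using m by simp
    then have "(k - 1) * (k*k - k + 1) = m * (m*m + m + 1)" using m by simp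
    then have "int ((k - 1) * (k*k - k + 1)) = int m * (int m * int m + int m + 1)" by (simp add: algebra_simps)
    also have "\<dots> = int k ^ 3 - 2 * int k ^ 2 + 2 * int k - 1" using m
      by (simp add: power3_eq_cube power2_eq_square algebra_simps)
    finally show ?thesis .
  qed
  have "int k ^ 3 - 2 * int k ^ 2 + 2 * int k \<ge> 2 * int k"
  proof -
    have "int k ^ 3 - 2 * int k ^ 2 = int k ^ 2 * (int k - 2)" by (simp add: algebra_simps power2_eq_square power3_eq_cube)
    moreover have "int k ^ 2 * (int k - 2) \<ge> 0" using k by simp
    ultimately show ?thesis by linarith
  qed
  then show v2: "2 * k < v" using h by linarith
  have "int v \<ge> 1" using v2 by simp
  then have e2: "int (v - 1) = int v - 1" by simp
  show "(k - 1) * (k*k - k + 1) < v - 1" using e1 e2 h by linarith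
  have "3 * k \<le> k * k" using k by simp
  then show "2 * k < k*k - k + 1" by linarith
qed

theorem theorem7:
  fixes V :: "'a set" and B :: "'a set set" and k v :: nat
  assumes "steiner_2_design V B k v"
    and "int v > int k ^ 3 - 2 * int k ^ 2 + 2 * int k"
  shows "\<not> silver (zero_BIG B)"
proof
  assume "silver (zero_BIG B)"
  then obtain r I c where reg: "regular_graph (zero_BIG B) r" and al: "alpha_set (zero_BIG B) I"
    and sc: "silver_coloring (zero_BIG B) r c I"
    unfolding silver_def by blast
  interpret des V B k v by unfold_locales (rule assms(1))
  note A = arith_facts[OF k3 assms(2)]
  have vG: "verts (zero_BIG B) = B" by (simp add: verts_def zero_BIG_def)
  have aG: "adj (zero_BIG B) = (\<lambda>b1 b2. b1 \<noteq> b2 \<and> b1 \<inter> b2 = {})" by (simp add: adj_def zero_BIG_def)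
  have IB: "I \<subseteq> B" using al unfolding alpha_set_def independent_set_def vG by blast
  have ne: "C \<noteq> {}" if "C \<in> B" for C using blk_card[OF that] k3 by auto
  have Iint: "C \<inter> D \<noteq> {}" if "C \<in> I" "D \<in> I" for C D
  proof (cases "C = D")
    case True then show ?thesis using ne IB that by auto
  next
    case False then show ?thesis using al that unfolding alpha_set_def independent_set_def aG by auto
  qed
  have finI: "finite I" using al unfolding alpha_set_def by blast
  obtain q where q: "q \<in> V" using card_V kv by (metis card.empty ex_in_conv less_zeroE)
  have "independent_set (zero_BIG B) {b\<in>B. q\<in>b}"
    unfolding independent_set_def vG aG by blast
  then have "card {b\<in>B. q\<in>b} \<le> card I" using al unfolding alpha_set_def by blast
  then have "v - 1 \<le> card I * (k - 1)" using star_card[OF q] by (meson le_trans mult_le_mono1)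
  then have "(k*k - k + 1) * (k - 1) < card I * (k - 1)" 
  proof -
    have "(k*k - k + 1) * (k - 1) = (k - 1) * (k*k - k + 1)" by (rule mult.commute)
    then show ?thesis using A(1) \<open>v - 1 \<le> card I * (k - 1)\<close> by linarith
  qed
  then have bigI: "k*k - k + 1 < card I" by (meson mult_less_cancel2)
  obtain p where p: "\<forall>C\<in>I. p \<in> C" using intersecting[OF IB Iint bigI] by blast
  have I2k: "2 * k < card I" using bigI A(3) by simp
  have cn: "closed_nbhd (zero_BIG B) X = insert X {Y\<in>B. X \<noteq> Y \<and> X \<inter> Y = {}}" for X
    by (simp add: closed_nbhd_def nbhd_def vG aG)
  have col: "c X < r + 1" if "X \<in> B" for X
    using sc that unfolding silver_coloring_def proper_coloring_def vG by blast
  have rb: "{0..<r+1} \<subseteq> c ` closed_nbhd (zero_BIG B) X" if "X \<in> I" for X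
    using sc that unfolding silver_coloring_def rainbow_def by blast
  have inj: "inj_on c (closed_nbhd (zero_BIG B) X)" if X: "X \<in> I" for X
  proof -
    let ?N = "closed_nbhd (zero_BIG B) X"
    have XB: "X \<in> B" using X IB by auto
    have "card (nbhd (zero_BIG B) X) = r" using reg XB unfolding regular_graph_def vG by blast
    moreover have "nbhd (zero_BIG B) X = {Y\<in>B. X \<noteq> Y \<and> X \<inter> Y = {}}"
      by (simp add: nbhd_def vG aG)
    ultimately have cN: "card ?N = r + 1" using finB by (simp add: cn)
    have finN: "finite ?N" using finB by (simp add: cn)
    have "r + 1 \<le> card (c ` ?N)" using card_mono[OF finite_imageI[OF finN] rb[OF X]] by simp
    moreover have "card (c ` ?N) \<le> card ?N" by (rule card_image_le[OF finN])
    ultimately have "card (c ` ?N) = card ?N" using cN by linarith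
    then show ?thesis by (rule eq_card_imp_inj_on[OF finN])
  qed
  have meet: "card {C\<in>I. C \<inter> X \<noteq> {}} \<le> k" if X: "X \<in> B" "p \<notin> X" for X
  proof -
    let ?f = "\<lambda>C. SOME y. y \<in> C \<inter> X"
    have fy: "?f C \<in> C \<inter> X" if "C \<inter> X \<noteq> {}" for C
      using that by (metis (mono_tags) someI_ex ex_in_conv)
    have "inj_on ?f {C\<in>I. C \<inter> X \<noteq> {}}"
    proof (rule inj_onI)
      fix C D assume C: "C \<in> {C\<in>I. C \<inter> X \<noteq> {}}" and D: "D \<in> {C\<in>I. C \<inter> X \<noteq> {}}"
        and eq: "?f C = ?f D"
      have "?f C \<in> C \<inter> X" "?f D \<in> D \<inter> X" using fy C D by auto
      moreover have "p \<noteq> ?f C" using fy[of C] C X by auto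
      ultimately show "C = D" using uniq[of C D p "?f C"] C D IB p eq by auto
    qed
    moreover have "?f ` {C\<in>I. C \<inter> X \<noteq> {}} \<subseteq> X" using fy by auto
    ultimately show ?thesis using card_inj_on_le[of ?f _ X] finb[OF X(1)] blk_card[OF X(1)] by simp
  qed
  have claimA: "c X \<noteq> c Y" if XY: "X \<in> B" "Y \<in> B" "p \<notin> X" "p \<notin> Y" "X \<noteq> Y" for X Y
  proof -
    let ?T = "{C\<in>I. C \<inter> X \<noteq> {}} \<union> {C\<in>I. C \<inter> Y \<noteq> {}}"
    have "card ?T \<le> k + k" using card_Un_le[of "{C\<in>I. C \<inter> X \<noteq> {}}" "{C\<in>I. C \<inter> Y \<noteq> {}}"]
      meet[OF XY(1,3)] meet[OF XY(2,4)] by linarith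
    then have "card ?T < card I" using I2k by simp
    then have lt: "card ?T < card I" .
    have "\<not> I \<subseteq> ?T"
    proof
      assume "I \<subseteq> ?T"
      moreover have "finite ?T" using finI by simp
      ultimately have "card I \<le> card ?T" by (simp add: card_mono)
      then show False using lt by linarith
    qed
    then obtain B0 where B0: "B0 \<in> I" "B0 \<inter> X = {}" "B0 \<inter> Y = {}" by blast
    have "X \<noteq> B0" "Y \<noteq> B0" using p B0 XY by auto
    then have "X \<in> closed_nbhd (zero_BIG B) B0" "Y \<in> closed_nbhd (zero_BIG B) B0"
      using B0 XY by (auto simp: cn)
    then show ?thesis using inj[OF B0(1)] XY(5) by (meson inj_onD)
  qed
  have claimB: "c B0 = c X" if X: "X \<in> B" "p \<notin> X" and B0: "B0 \<in> I" "B0 \<inter> X \<noteq> {}" for X B0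
  proof -
    have "c X \<in> {0..<r+1}" using col[OF X(1)] by simp
    then have "c X \<in> c ` closed_nbhd (zero_BIG B) B0" using rb[OF B0(1)] by (rule subsetD[rotated])
    then obtain Z where Z: "Z \<in> closed_nbhd (zero_BIG B) B0" "c Z = c X" by (metis imageE)
    show ?thesis
    proof (cases "Z = B0")
      case True then show ?thesis using Z by simp
    next
      case False
      then have ZB: "Z \<in> B" "B0 \<inter> Z = {}" using Z(1) unfolding cn by simp_all
      have pB0: "p \<in> B0" using p B0(1) by simp
      have "p \<notin> Z" using pB0 ZB(2) by (simp add: disjoint_iff)
      have "Z = X"
      proof (rule ccontr)
        assume "Z \<noteq> X"
        then have "c Z \<noteq> c X" by (rule claimA[OF ZB(1) X(1) \<open>p \<notin> Z\<close> X(2)])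
        then show False using Z(2) by simp
      qed
      then have False using ZB(2) B0(2) by simp
      then show ?thesis ..
    qed
  qed
  obtain B0 where B0: "B0 \<in> I" using I2k by (metis card.empty less_zeroE ex_in_conv)
  have B0B: "B0 \<in> B" using B0 IB by auto
  have "card (B0 - {p}) > 0" using blk_card[OF B0B] k3 finb[OF B0B] p B0 by simp
  then obtain q where q: "q \<in> B0" "q \<noteq> p" by (metis card.empty less_irrefl ex_in_conv Diff_iff singletonI)
  have "card B0 < card V" using blk_card[OF B0B] card_V kv by simp
  then have "\<not> V \<subseteq> B0" using card_mono[OF finb[OF B0B]] by (meson leD)
  then obtain w where w: "w \<in> V" "w \<notin> B0" by blast
  have qV: "q \<in> V" using q B0B blk_sub by auto
  obtain X where X: "X \<in> B" "q \<in> X" "w \<in> X" using ex_blk[OF qV w(1)] q w by auto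
  have pX: "p \<notin> X"
  proof
    assume "p \<in> X"
    then have "X = B0" using uniq[of X B0 p q] X q p B0 B0B by auto
    then show False using X w by auto
  qed
  have "card (B0 \<union> X) \<le> k + k" using card_Un_le[of B0 X] blk_card[OF B0B] blk_card[OF X(1)] by simp
  then have "card (B0 \<union> X) < card V" using A(2) card_V by simp
  moreover have "finite (B0 \<union> X)" using finb[OF B0B] finb[OF X(1)] by simp
  ultimately have "\<not> V \<subseteq> B0 \<union> X" using card_mono by (meson leD)
  then obtain w' where w': "w' \<in> V" "w' \<notin> B0 \<union> X" by blast
  obtain Y where Y: "Y \<in> B" "q \<in> Y" "w' \<in> Y" using ex_blk[OF qV w'(1)] q w' X by auto
  have pY: "p \<notin> Y"
  proof
    assume "p \<in> Y"
    then have "Y = B0" using uniq[of Y B0 p q] Y q p B0 B0B by auto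
    then show False using Y w' by auto
  qed
  have "X \<noteq> Y" using Y w' by auto
  moreover have "c B0 = c X" using claimB[OF X(1) pX B0] q X by auto
  moreover have "c B0 = c Y" using claimB[OF Y(1) pY B0] q Y by auto
  ultimately show False using claimA[OF X(1) Y(1) pX pY] by simp
qed

end
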